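(* Assume $\alpha=2$, the far-destination approximation (every relay–destination distance equals $d$), and condition on $N\ge1$. Let $i^*$ be the relay closest to the source; conditioned on $N\ge1$, its distance $d_{i^*}$ has density $f(r)=2\zeta\pi\lambda r e^{-\pi\lambda r^2}$ on $[0,R_{\mathcal D}]$ with $\zeta=1/(1-e^{-\pi\lambda R_{\mathcal D}^2})$. Define $$\mathcal{P}_2(P)=\mathcal{P}\big(x_0+\eta y_{i^*}(x_{i^*}-\epsilon)<\epsilon,\ x_{i^*}>\epsilon\big)+\mathcal{P}\big(x_0<\epsilon,\ x_{i^*}<\epsilon\big),$$ with $x_{i^*}=|h_{i^*}|^2/(1+d_{i^*}^2)$, $y_{i^*}=|g_{i^*}|^2/(1+d^2)$. Then the diversity gain of this selection scheme is $2$: $-\lim_{P\to\infty}\frac{\log\mathcal{P}_2(P)}{\log P}=2$.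
   Context: Source at origin, destination at distance $d>0$; relays form a homogeneous Poisson point process of intensity $\lambda>0$ in the disc of radius $R_{\mathcal D}$ centred at the source. Fading $h_d,h_{i^*},g_{i^*}$ independent $\mathcal{CN}(0,1)$, independent of locations; $x_0=|h_d|^2/(1+d^2)$. $\tau=2^{2R}-1$ for target rate $R>0$, $\epsilon=\tau/P$ with transmit power $P$, $\eta\in(0,1]$ energy harvesting efficiency. Relay decodes iff $x_{i^*}>\epsilon$ and forwards with harvested power $\eta(Px_{i^*}-\tau)$; outage when combined SNR $P(x_0+\eta y_{i^*}(x_{i^*}-\epsilon))<\tau$. *)

theory Defs
  imports "HOL-Probability.Probability"
begin

definition zeta :: "real \<Rightarrow> real \<Rightarrow> real" where
  "zeta lam RD = 1 / (1 - exp (- pi * lam * RD\<^sup>2))"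

definition nearest_density :: "real \<Rightarrow> real \<Rightarrow> real \<Rightarrow> real" where
  "nearest_density lam RD r =
     (if 0 \<le> r \<and> r \<le> RD then 2 * zeta lam RD * pi * lam * r * exp (- pi * lam * r\<^sup>2) else 0)"

text \<open>Joint law of (|h_d|^2, |h_{i*}|^2, |g_{i*}|^2, d_{i*}): three independent Exp(1)
  variables (squared moduli of CN(0,1) fading) independent of the distance d_{i*}.\<close>
definition joint_law :: "real \<Rightarrow> real \<Rightarrow> (real \<times> real \<times> real \<times> real) measure" where
  "joint_law lam RD =
     density (lborel \<Otimes>\<^sub>M (lborel \<Otimes>\<^sub>M (lborel \<Otimes>\<^sub>M lborel)))
       (\<lambda>(a, b, c, r). ennreal (exponential_density 1 a * exponential_density 1 b
                                  * exponential_density 1 c * nearest_density lam RD r))"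

definition eps_of :: "real \<Rightarrow> real \<Rightarrow> real" where
  "eps_of Rt P = (2 powr (2 * Rt) - 1) / P"

text \<open>P_2(P) with x_0 = a/(1+d^2), x_{i*} = b/(1+r^2), y_{i*} = c/(1+d^2).\<close>
definition P2 :: "real \<Rightarrow> real \<Rightarrow> real \<Rightarrow> real \<Rightarrow> real \<Rightarrow> real \<Rightarrow> real" where
  "P2 lam RD d eta Rt P =
     measure (joint_law lam RD)
       {(a, b, c, r). a / (1 + d\<^sup>2) + eta * (c / (1 + d\<^sup>2)) * (b / (1 + r\<^sup>2) - eps_of Rt P) < eps_of Rt P
                     \<and> b / (1 + r\<^sup>2) > eps_of Rt P}
   + measure (joint_law lam RD)
       {(a, b, c, r). a / (1 + d\<^sup>2) < eps_of Rt P \<and> b / (1 + r\<^sup>2) < eps_of Rt P}"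

end

theory Submission imports Defs "HOL-Real_Asymp.Real_Asymp" begin
lemma sf2: "sigma_finite_measure (lborel \<Otimes>\<^sub>M (lborel::real measure))"
  by (intro sigma_finite_pair_measure) (auto intro: lborel.sigma_finite_measure_axioms)
lemma sf3: "sigma_finite_measure (lborel \<Otimes>\<^sub>M (lborel \<Otimes>\<^sub>M (lborel::real measure)))"
  by (intro sigma_finite_pair_measure sf2) (auto intro: lborel.sigma_finite_measure_axioms)

lemma split_int:
  fixes g :: "('a \<times> 'b) \<Rightarrow> ennreal"
  assumes "sigma_finite_measure N" "g \<in> borel_measurable (M \<Otimes>\<^sub>M N)"
  shows "(\<integral>\<^sup>+z. g z \<partial>(M \<Otimes>\<^sub>M N)) = (\<integral>\<^sup>+x. \<integral>\<^sup>+y. g (x,y) \<partial>N \<partial>M)"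
  using sigma_finite_measure.nn_integral_fst[OF assms] by simp

lemma prod_int:
  fixes F :: "'a \<Rightarrow> ennreal" and G :: "'b \<Rightarrow> ennreal"
  assumes "sigma_finite_measure N" and [measurable]: "F \<in> borel_measurable M" "G \<in> borel_measurable N"
  shows "(\<integral>\<^sup>+z. F (fst z) * G (snd z) \<partial>(M \<Otimes>\<^sub>M N)) = (\<integral>\<^sup>+x. F x \<partial>M) * (\<integral>\<^sup>+y. G y \<partial>N)"
proof -
  have "(\<integral>\<^sup>+z. F (fst z) * G (snd z) \<partial>(M \<Otimes>\<^sub>M N)) = (\<integral>\<^sup>+x. \<integral>\<^sup>+y. F x * G y \<partial>N \<partial>M)"
    by (subst split_int[OF assms(1)]) auto
  also have "\<dots> = (\<integral>\<^sup>+x. F x * (\<integral>\<^sup>+y. G y \<partial>N) \<partial>M)"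
    by (simp add: nn_integral_cmult)
  also have "\<dots> = (\<integral>\<^sup>+x. F x \<partial>M) * (\<integral>\<^sup>+y. G y \<partial>N)"
    by (simp add: nn_integral_multc)
  finally show ?thesis .
qed

type_synonym r4 = "real \<times> real \<times> real \<times> real"
abbreviation "L4 \<equiv> (lborel \<Otimes>\<^sub>M (lborel \<Otimes>\<^sub>M (lborel \<Otimes>\<^sub>M lborel)) :: r4 measure)"
abbreviation "L2 \<equiv> (lborel \<Otimes>\<^sub>M lborel :: (real \<times> real) measure)"

lemma prod4:
  fixes F R :: "real \<Rightarrow> ennreal" and H :: "real \<times> real \<Rightarrow> ennreal"
  assumes [measurable]: "F \<in> borel_measurable borel" "H \<in> borel_measurable L2" "R \<in> borel_measurable borel"
  shows "(\<integral>\<^sup>+z. F (fst z) * H (fst (snd z), fst (snd (snd z))) * R (snd (snd (snd z))) \<partial>L4)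
    = (\<integral>\<^sup>+a. F a \<partial>lborel) * (\<integral>\<^sup>+x. H x \<partial>L2) * (\<integral>\<^sup>+r. R r \<partial>lborel)"
proof -
  have m1: "(\<lambda>w::real\<times>real\<times>real. H (fst w, fst (snd w)) * R (snd (snd w))) \<in> borel_measurable (lborel \<Otimes>\<^sub>M (lborel \<Otimes>\<^sub>M lborel))"
    by measurable
  have "(\<integral>\<^sup>+z. F (fst z) * H (fst (snd z), fst (snd (snd z))) * R (snd (snd (snd z))) \<partial>L4)
     = (\<integral>\<^sup>+z. F (fst z) * (\<lambda>w. H (fst w, fst (snd w)) * R (snd (snd w))) (snd z) \<partial>L4)"
    by (simp add: mult.assoc)
  also have "\<dots> = (\<integral>\<^sup>+a. F a \<partial>lborel) * (\<integral>\<^sup>+w. H (fst w, fst (snd w)) * R (snd (snd w)) \<partial>(lborel \<Otimes>\<^sub>M (lborel \<Otimes>\<^sub>M lborel)))"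
    by (rule prod_int[OF sf3]) (use m1 in auto)
  also have "(\<integral>\<^sup>+w. H (fst w, fst (snd w)) * R (snd (snd w)) \<partial>(lborel \<Otimes>\<^sub>M (lborel \<Otimes>\<^sub>M lborel)))
      = (\<integral>\<^sup>+b. \<integral>\<^sup>+v. H (b, fst v) * R (snd v) \<partial>L2 \<partial>lborel)"
    by (subst split_int[OF sf2]) (use m1 in auto)
  also have "\<dots> = (\<integral>\<^sup>+b. (\<integral>\<^sup>+c. H (b, c) \<partial>lborel) * (\<integral>\<^sup>+r. R r \<partial>lborel) \<partial>lborel)"
    by (intro nn_integral_cong prod_int[OF lborel.sigma_finite_measure_axioms]) auto
  also have "\<dots> = (\<integral>\<^sup>+b. \<integral>\<^sup>+c. H (b, c) \<partial>lborel \<partial>lborel) * (\<integral>\<^sup>+r. R r \<partial>lborel)"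
    by (rule nn_integral_multc) measurable
  also have "(\<integral>\<^sup>+b. \<integral>\<^sup>+c. H (b, c) \<partial>lborel \<partial>lborel) = (\<integral>\<^sup>+x. H x \<partial>L2)"
    by (subst split_int[OF lborel.sigma_finite_measure_axioms]) auto
  finally show ?thesis by (simp add: mult.assoc)
qed
lemma nd_meas[measurable]: "nearest_density lam RD \<in> borel_measurable borel"
  unfolding nearest_density_def by measurable
lemma ed_meas[measurable]: "exponential_density l \<in> borel_measurable borel"
  by measurable
lemma f_meas: "(\<lambda>(a, b, c, r). ennreal (exponential_density 1 a * exponential_density 1 b
                                  * exponential_density 1 c * nearest_density lam RD r)) \<in> borel_measurable L4"
  by measurable
lemma predS: "Measurable.pred L4 P \<Longrightarrow> Collect P \<in> sets L4"
proof -
  assume "Measurable.pred L4 P"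
  then have "{x \<in> space L4. P x} \<in> sets L4" by (rule predE)
  moreover have "{x \<in> space L4. P x} = Collect P" by (auto simp: space_pair_measure)
  ultimately show ?thesis by simp
qed
lemma S1_meas: "{(a, b, c, r). a / (1 + d\<^sup>2) + eta * (c / (1 + d\<^sup>2)) * (b / (1 + r\<^sup>2) - e) < e
                     \<and> b / (1 + r\<^sup>2) > (e::real)} \<in> sets L4"
  by (rule predS) measurable
lemma S2_meas: "{(a, b, c, r). a / (1 + d\<^sup>2) < e \<and> b / (1 + r\<^sup>2) < (e::real)} \<in> sets L4"
  by (rule predS) measurable
lemma E_int: "(\<integral>\<^sup>+x. ennreal (exponential_density 1 x) \<partial>lborel) = 1"
proof -
  interpret prob_space "density lborel (exponential_density 1)"
    by (rule prob_space_exponential_density) simp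
  have "emeasure (density lborel (exponential_density 1)) UNIV = 1"
    using emeasure_space_1 by simp
  then show ?thesis by (simp add: emeasure_density)
qed
lemma zeta_pos: "lam > 0 \<Longrightarrow> RD > 0 \<Longrightarrow> zeta lam RD > 0"
  unfolding zeta_def by (simp add: field_simps)

lemma ed_nonneg: "0 \<le> exponential_density 1 x" by (simp add: exponential_density_def)
lemma ed_le1: "exponential_density 1 x \<le> 1" by (simp add: exponential_density_def)
lemma ed_neg: "x < 0 \<Longrightarrow> exponential_density 1 x = 0" by (simp add: exponential_density_def)
lemma ed_low: "0 \<le> x \<Longrightarrow> x \<le> 1 \<Longrightarrow> exp (-1) \<le> exponential_density 1 x"
  by (simp add: exponential_density_def)

definition "Gmax lam RD = 2 * zeta lam RD * pi * lam * RD"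
definition "Gmin lam RD = zeta lam RD * pi * lam * RD * exp (- pi * lam * RD\<^sup>2)"

lemma Gmax_pos: "lam > 0 \<Longrightarrow> RD > 0 \<Longrightarrow> Gmax lam RD > 0"
  using zeta_pos[of lam RD] by (simp add: Gmax_def)
lemma Gmin_pos: "lam > 0 \<Longrightarrow> RD > 0 \<Longrightarrow> Gmin lam RD > 0"
  using zeta_pos[of lam RD] by (simp add: Gmin_def)

lemma nd_nonneg: "lam > 0 \<Longrightarrow> RD > 0 \<Longrightarrow> 0 \<le> nearest_density lam RD r"
  using zeta_pos[of lam RD] by (simp add: nearest_density_def)
lemma nd_out: "\<not> (0 \<le> r \<and> r \<le> RD) \<Longrightarrow> nearest_density lam RD r = 0"
  unfolding nearest_density_def by (rule if_not_P)
lemma nd_le: "lam > 0 \<Longrightarrow> RD > 0 \<Longrightarrow> nearest_density lam RD r \<le> Gmax lam RD"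
proof (cases "0 \<le> r \<and> r \<le> RD")
  case True
  assume l: "lam > 0" "RD > 0"
  have z: "zeta lam RD > 0" using zeta_pos l by auto
  have "2 * zeta lam RD * pi * lam * r * exp (- pi * lam * r\<^sup>2) \<le> 2 * zeta lam RD * pi * lam * RD * 1"
    using True z l by (intro mult_mono) auto
  then show ?thesis using True by (simp add: nearest_density_def Gmax_def)
next
  case False
  assume l: "lam > 0" "RD > 0"
  then show ?thesis using False zeta_pos[of lam RD] nd_out[OF False] by (simp add: Gmax_def)
qed
lemma nd_ge: "lam > 0 \<Longrightarrow> RD > 0 \<Longrightarrow> RD/2 \<le> r \<Longrightarrow> r \<le> RD \<Longrightarrow> Gmin lam RD \<le> nearest_density lam RD r"
proof -
  assume l: "lam > 0" "RD > 0" and r: "RD/2 \<le> r" "r \<le> RD"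
  have z: "zeta lam RD > 0" using zeta_pos l by auto
  have e: "exp (- pi * lam * RD\<^sup>2) \<le> exp (- pi * lam * r\<^sup>2)"
    using r l by (simp add: power_mono)
  have "2 * zeta lam RD * pi * lam * (RD/2) * exp (- pi * lam * RD\<^sup>2) \<le> 2 * zeta lam RD * pi * lam * r * exp (- pi * lam * r\<^sup>2)"
    using z l r e by (intro mult_mono) auto
  then show ?thesis using r l by (simp add: nearest_density_def Gmin_def)
qed

abbreviation fJ :: "real \<Rightarrow> real \<Rightarrow> r4 \<Rightarrow> ennreal" where
  "fJ lam RD \<equiv> (\<lambda>(a, b, c, r). ennreal (exponential_density 1 a * exponential_density 1 b
                                  * exponential_density 1 c * nearest_density lam RD r))"

lemma em_J: "S \<in> sets L4 \<Longrightarrow> emeasure (joint_law lam RD) S = (\<integral>\<^sup>+z. fJ lam RD z * indicator S z \<partial>L4)"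
  unfolding joint_law_def by (rule emeasure_density[OF f_meas])

lemma int_Icc: "0 \<le> X \<Longrightarrow> (\<integral>\<^sup>+x. indicator {0..X} x \<partial>lborel) = ennreal X"
  by simp

lemma upper_S2:
  assumes l: "lam > 0" "RD > 0" "e > 0"
  shows "emeasure (joint_law lam RD) {(a, b, c, r). a / (1 + d\<^sup>2) < e \<and> b / (1 + r\<^sup>2) < e}
    \<le> ennreal ((1+d\<^sup>2)*e) * ennreal ((1+RD\<^sup>2)*e) * (ennreal (Gmax lam RD) * ennreal RD)"
proof -
  define S :: "r4 set" where "S = {(a, b, c, r). a / (1 + d\<^sup>2) < e \<and> b / (1 + r\<^sup>2) < e}"
  define F :: "real \<Rightarrow> ennreal" where "F = (\<lambda>a. indicator {0..(1+d\<^sup>2)*e} a)"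
  define H :: "real \<times> real \<Rightarrow> ennreal" where "H = (\<lambda>x. indicator {0..(1+RD\<^sup>2)*e} (fst x) * ennreal (exponential_density 1 (snd x)))"
  define R :: "real \<Rightarrow> ennreal" where "R = (\<lambda>r. ennreal (Gmax lam RD) * indicator {0..RD} r)"
  have [measurable]: "F \<in> borel_measurable borel" "H \<in> borel_measurable L2" "R \<in> borel_measurable borel"
    unfolding F_def H_def R_def by measurable
  have "emeasure (joint_law lam RD) S = (\<integral>\<^sup>+z. fJ lam RD z * indicator S z \<partial>L4)"
    unfolding S_def by (rule em_J[OF S2_meas])
  also have "\<dots> \<le> (\<integral>\<^sup>+z. F (fst z) * H (fst (snd z), fst (snd (snd z))) * R (snd (snd (snd z))) \<partial>L4)"
  proof (rule nn_integral_mono)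
    fix z :: r4
    obtain a b c r where z: "z = (a, b, c, r)" by (cases z) auto
    show "fJ lam RD z * indicator S z \<le> F (fst z) * H (fst (snd z), fst (snd (snd z))) * R (snd (snd (snd z)))"
    proof (cases "z \<in> S \<and> 0 \<le> a \<and> 0 \<le> b \<and> 0 \<le> r \<and> r \<le> RD")
      case False
      then have "fJ lam RD z * indicator S z = 0"
        using ed_neg[of a] ed_neg[of b] nd_out[of r RD lam] by (auto simp: z)
      then show ?thesis by (metis zero_le)
    next
      case True
      then have ab: "a / (1 + d\<^sup>2) < e" "b / (1 + r\<^sup>2) < e" "0 \<le> a" "0 \<le> b" "0 \<le> r" "r \<le> RD"
        by (auto simp: z S_def)
      have "a \<le> (1+d\<^sup>2)*e" using ab by (simp add: divide_less_eq add_pos_nonneg mult.commute)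
      moreover have "b \<le> (1+RD\<^sup>2)*e"
      proof -
        have "b < (1+r\<^sup>2)*e" using ab by (simp add: divide_less_eq add_pos_nonneg mult.commute)
        also have "\<dots> \<le> (1+RD\<^sup>2)*e" using ab l by (intro mult_right_mono) (auto intro: power_mono)
        finally show ?thesis by simp
      qed
      ultimately have rhs: "F (fst z) * H (fst (snd z), fst (snd (snd z))) * R (snd (snd (snd z)))
          = ennreal (exponential_density 1 c * Gmax lam RD)"
        using ab Gmax_pos[OF l(1,2)] by (simp add: z F_def H_def R_def ennreal_mult ed_nonneg mult.commute)
      have "exponential_density 1 a * exponential_density 1 b * exponential_density 1 c * nearest_density lam RD r
          \<le> 1 * 1 * exponential_density 1 c * Gmax lam RD"
        using l by (intro mult_mono) (auto simp: ed_nonneg ed_le1 nd_le nd_nonneg mult_nonneg_nonneg)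
      then show ?thesis unfolding rhs using True by (auto simp: z intro!: ennreal_leI)
    qed
  qed
  also have "\<dots> = (\<integral>\<^sup>+a. F a \<partial>lborel) * (\<integral>\<^sup>+x. H x \<partial>L2) * (\<integral>\<^sup>+r. R r \<partial>lborel)"
    by (rule prod4) measurable
  also have "(\<integral>\<^sup>+a. F a \<partial>lborel) = ennreal ((1+d\<^sup>2)*e)"
    unfolding F_def using l by (intro int_Icc) (auto intro: add_nonneg_nonneg)
  also have "(\<integral>\<^sup>+x. H x \<partial>L2) = ennreal ((1+RD\<^sup>2)*e)"
  proof -
    have "(\<integral>\<^sup>+x. H x \<partial>L2) = (\<integral>\<^sup>+b. \<integral>\<^sup>+c. indicator {0..(1+RD\<^sup>2)*e} b * ennreal (exponential_density 1 c) \<partial>lborel \<partial>lborel)"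
      by (subst split_int[OF lborel.sigma_finite_measure_axioms]) (auto simp: H_def)
    also have "\<dots> = (\<integral>\<^sup>+b. indicator {0..(1+RD\<^sup>2)*e} b \<partial>lborel)"
      by (simp add: nn_integral_cmult E_int)
    also have "\<dots> = ennreal ((1+RD\<^sup>2)*e)" using l by (intro int_Icc) (auto intro: add_nonneg_nonneg)
    finally show ?thesis .
  qed
  also have "(\<integral>\<^sup>+r. R r \<partial>lborel) = ennreal (Gmax lam RD) * ennreal RD"
    unfolding R_def using l by (simp add: nn_integral_cmult)
  finally show ?thesis unfolding S_def .
qed


lemma int_Ico: "0 \<le> X \<Longrightarrow> (\<integral>\<^sup>+x. indicator {0..<X} x \<partial>lborel) = ennreal X"
  by simp

lemma lower_S2:
  assumes l: "lam > 0" "RD > 0" "e > 0" "e \<le> 1"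
  shows "ennreal (exp (-1) * e) * ennreal (exp (-1) * e) * (ennreal (Gmin lam RD) * ennreal (RD/2))
    \<le> emeasure (joint_law lam RD) {(a, b, c, r). a / (1 + d\<^sup>2) < e \<and> b / (1 + r\<^sup>2) < e}"
proof -
  define S :: "r4 set" where "S = {(a, b, c, r). a / (1 + d\<^sup>2) < e \<and> b / (1 + r\<^sup>2) < e}"
  define F :: "real \<Rightarrow> ennreal" where "F = (\<lambda>a. ennreal (exp (-1)) * indicator {0..<e} a)"
  define H :: "real \<times> real \<Rightarrow> ennreal" where "H = (\<lambda>x. ennreal (exp (-1)) * indicator {0..<e} (fst x) * ennreal (exponential_density 1 (snd x)))"
  define R :: "real \<Rightarrow> ennreal" where "R = (\<lambda>r. ennreal (Gmin lam RD) * indicator {RD/2..RD} r)"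
  have [measurable]: "F \<in> borel_measurable borel" "H \<in> borel_measurable L2" "R \<in> borel_measurable borel"
    unfolding F_def H_def R_def by measurable
  have "(\<integral>\<^sup>+a. F a \<partial>lborel) = ennreal (exp (-1) * e)"
    unfolding F_def using l by (simp add: nn_integral_cmult ennreal_mult)
  moreover have "(\<integral>\<^sup>+x. H x \<partial>L2) = ennreal (exp (-1) * e)"
  proof -
    have "(\<integral>\<^sup>+x. H x \<partial>L2) = (\<integral>\<^sup>+b. \<integral>\<^sup>+c. (ennreal (exp (-1)) * indicator {0..<e} b) * ennreal (exponential_density 1 c) \<partial>lborel \<partial>lborel)"
      by (subst split_int[OF lborel.sigma_finite_measure_axioms]) (auto simp: H_def)
    also have "\<dots> = (\<integral>\<^sup>+b. ennreal (exp (-1)) * indicator {0..<e} b \<partial>lborel)"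
      by (simp add: nn_integral_cmult E_int)
    also have "\<dots> = ennreal (exp (-1) * e)" using l by (simp add: nn_integral_cmult ennreal_mult)
    finally show ?thesis .
  qed
  moreover have "(\<integral>\<^sup>+r. R r \<partial>lborel) = ennreal (Gmin lam RD) * ennreal (RD/2)"
    unfolding R_def using l by (simp add: nn_integral_cmult)
  ultimately have "ennreal (exp (-1) * e) * ennreal (exp (-1) * e) * (ennreal (Gmin lam RD) * ennreal (RD/2))
     = (\<integral>\<^sup>+a. F a \<partial>lborel) * (\<integral>\<^sup>+x. H x \<partial>L2) * (\<integral>\<^sup>+r. R r \<partial>lborel)" by simp
  also have "\<dots> = (\<integral>\<^sup>+z. F (fst z) * H (fst (snd z), fst (snd (snd z))) * R (snd (snd (snd z))) \<partial>L4)"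
    by (rule prod4[symmetric]) measurable
  also have "\<dots> \<le> (\<integral>\<^sup>+z. fJ lam RD z * indicator S z \<partial>L4)"
  proof (rule nn_integral_mono)
    fix z :: r4
    obtain a b c r where z: "z = (a, b, c, r)" by (cases z) auto
    show "F (fst z) * H (fst (snd z), fst (snd (snd z))) * R (snd (snd (snd z))) \<le> fJ lam RD z * indicator S z"
    proof (cases "0 \<le> a \<and> a < e \<and> 0 \<le> b \<and> b < e \<and> RD/2 \<le> r \<and> r \<le> RD")
      case False
      then have "F (fst z) * H (fst (snd z), fst (snd (snd z))) * R (snd (snd (snd z))) = 0"
        by (auto simp: z F_def H_def R_def)
      then show ?thesis by (metis zero_le)
    next
      case True
      have "0 < 1 + d\<^sup>2" "1 \<le> 1 + r\<^sup>2" by (auto intro: add_pos_nonneg)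
      then have "a / (1 + d\<^sup>2) \<le> a" "b / (1 + r\<^sup>2) \<le> b" using True
        by (auto simp: divide_le_eq mult_le_cancel_left1 add_pos_nonneg intro: mult_le_cancel_left1)
      then have inS: "z \<in> S" using True by (auto simp: S_def z)
      have c0: "0 \<le> exponential_density 1 c" by (rule ed_nonneg)
      have lhs: "F (fst z) * H (fst (snd z), fst (snd (snd z))) * R (snd (snd (snd z)))
          = ennreal (exp (-1) * exp (-1) * exponential_density 1 c * Gmin lam RD)"
        using True Gmin_pos[OF l(1,2)] c0 by (simp add: z F_def H_def R_def ennreal_mult mult_ac)
      have "exp (-1) * exp (-1) * exponential_density 1 c * Gmin lam RD \<le>
         exponential_density 1 a * exponential_density 1 b * exponential_density 1 c * nearest_density lam RD r"
        using l True c0 Gmin_pos[OF l(1,2)]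
        by (intro mult_mono) (auto simp: ed_low nd_ge ed_nonneg)
      then show ?thesis unfolding lhs using inS by (auto simp: z intro!: ennreal_leI)
    qed
  qed
  also have "\<dots> = emeasure (joint_law lam RD) S"
    unfolding S_def by (rule em_J[OF S2_meas, symmetric])
  finally show ?thesis unfolding S_def .
qed


lemma ln_int:
  assumes "0 < t" "t \<le> 1"
  shows "(\<integral>\<^sup>+b. ennreal (t / (b - s)) * indicator {s+t..s+1} b \<partial>lborel) = ennreal (- t * ln t)"
proof -
  have "(\<integral>\<^sup>+b. ennreal (t / (b - s)) * indicator {s+t..s+1} b \<partial>lborel) = ennreal (t * ln ((s+1) - s) - t * ln ((s+t) - s))"
  proof (rule nn_integral_FTC_Icc[where F="\<lambda>b. t * ln (b - s)" and f="\<lambda>b. t / (b - s)"])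
    show "(\<lambda>b. t / (b - s)) \<in> borel_measurable borel" by measurable
    fix x :: real assume "x \<in> {s+t..s+1}"
    then have x: "x - s > 0" using assms by simp
    then show "((\<lambda>b. t * ln (b - s)) has_real_derivative t / (x - s)) (at x)"
      by (auto intro!: derivative_eq_intros simp: field_simps)
    show "0 \<le> t / (x - s)" using x assms by simp
  qed (use assms in auto)
  then show ?thesis by simp
qed

lemma H_int:
  fixes s t :: real
  assumes s0: "s > 0" and t0: "t > 0" and t1: "t \<le> 1"
  defines "H \<equiv> (\<lambda>x. indicator {0..s+t} (fst x) * ennreal (exponential_density 1 (snd x))
      + ennreal (if s+t \<le> fst x \<and> fst x \<le> s+1 \<and> 0 \<le> snd x \<and> snd x \<le> t / (fst x - s) then 1 else 0)
      + ennreal (exponential_density 1 (fst x)) * indicator {0..t} (snd x))"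
  shows "(\<integral>\<^sup>+x. H x \<partial>L2) = ennreal (s+t) + ennreal (- t * ln t) + ennreal t"
proof -
  have [measurable]: "H \<in> borel_measurable L2" unfolding H_def by measurable
    have "(\<integral>\<^sup>+x. H x \<partial>L2) = (\<integral>\<^sup>+b. \<integral>\<^sup>+c. H (b, c) \<partial>lborel \<partial>lborel)"
      by (subst split_int[OF lborel.sigma_finite_measure_axioms]) auto
    also have "\<dots> = (\<integral>\<^sup>+b. indicator {0..s+t} b + ennreal (t / (b - s)) * indicator {s+t..s+1} b
                 + ennreal (exponential_density 1 b) * ennreal t \<partial>lborel)"
    proof (rule nn_integral_cong)
      fix b :: real
      have eq: "(\<lambda>c. ennreal (if s+t \<le> b \<and> b \<le> s+1 \<and> 0 \<le> c \<and> c \<le> t / (b - s) then 1 else 0))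
          = (\<lambda>c. indicator {s+t..s+1} b * indicator {0..t / (b - s)} c)"
        by (auto simp: indicator_def)
      have "(\<integral>\<^sup>+c. H (b, c) \<partial>lborel) = (\<integral>\<^sup>+c. indicator {0..s+t} b * ennreal (exponential_density 1 c) \<partial>lborel)
          + (\<integral>\<^sup>+c. indicator {s+t..s+1} b * indicator {0..t / (b - s)} c \<partial>lborel)
          + (\<integral>\<^sup>+c. ennreal (exponential_density 1 b) * indicator {0..t} c \<partial>lborel)"
        unfolding H_def fst_conv snd_conv eq[symmetric]
        apply (subst nn_integral_add, measurable, measurable)
        apply (subst nn_integral_add, measurable, measurable)
        done
      also have "\<dots> = indicator {0..s+t} b + ennreal (t / (b - s)) * indicator {s+t..s+1} b
                 + ennreal (exponential_density 1 b) * ennreal t"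
      proof -
        have "(\<integral>\<^sup>+c. indicator {s+t..s+1} b * indicator {0..t / (b - s)} c \<partial>lborel) = ennreal (t / (b - s)) * indicator {s+t..s+1} b"
        proof (cases "b \<in> {s+t..s+1}")
          case True
          then have "t / (b - s) \<ge> 0" using t0 by simp
          then show ?thesis using True by (simp add: nn_integral_cmult)
        qed simp
        then show ?thesis using t0 by (simp add: nn_integral_cmult E_int)
      qed
      finally show "(\<integral>\<^sup>+c. H (b, c) \<partial>lborel) = indicator {0..s+t} b + ennreal (t / (b - s)) * indicator {s+t..s+1} b
                 + ennreal (exponential_density 1 b) * ennreal t" .
    qed
    also have "\<dots> = (\<integral>\<^sup>+b. indicator {0..s+t} b \<partial>lborel) + (\<integral>\<^sup>+b. ennreal (t / (b - s)) * indicator {s+t..s+1} b \<partial>lborel)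
        + (\<integral>\<^sup>+b. ennreal (exponential_density 1 b) * ennreal t \<partial>lborel)"
      apply (subst nn_integral_add, measurable, measurable)
      apply (subst nn_integral_add, measurable, measurable)
      done
    also have "\<dots> = ennreal (s+t) + ennreal (- t * ln t) + ennreal t"
      using s0 t0 t1 by (simp add: ln_int nn_integral_multc E_int)
    finally show ?thesis .
  qed

lemma upper_S1:
  assumes l: "lam > 0" "RD > 0" "e > 0" "0 < eta" "eta \<le> 1"
    and sdef: "s = (1+RD\<^sup>2)*e" and tdef: "t = (1+RD\<^sup>2)*(1+d\<^sup>2)*e/eta" and t1: "t \<le> 1"
  shows "emeasure (joint_law lam RD) {(a, b, c, r). a / (1 + d\<^sup>2) + eta * (c / (1 + d\<^sup>2)) * (b / (1 + r\<^sup>2) - e) < e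
                     \<and> b / (1 + r\<^sup>2) > e}
    \<le> ennreal ((1+d\<^sup>2)*e) * (ennreal (s+t) + ennreal (- t * ln t) + ennreal t) * (ennreal (Gmax lam RD) * ennreal RD)"
proof -
  define S :: "r4 set" where "S = {(a, b, c, r). a / (1 + d\<^sup>2) + eta * (c / (1 + d\<^sup>2)) * (b / (1 + r\<^sup>2) - e) < e
                     \<and> b / (1 + r\<^sup>2) > e}"
  have t0: "t > 0" using l by (simp add: tdef add_pos_nonneg)
  have s0: "s > 0" using l by (simp add: sdef add_pos_nonneg)
  define F :: "real \<Rightarrow> ennreal" where "F = (\<lambda>a. indicator {0..(1+d\<^sup>2)*e} a)"
  define H :: "real \<times> real \<Rightarrow> ennreal" where "H = (\<lambda>x. indicator {0..s+t} (fst x) * ennreal (exponential_density 1 (snd x))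
      + ennreal (if s+t \<le> fst x \<and> fst x \<le> s+1 \<and> 0 \<le> snd x \<and> snd x \<le> t / (fst x - s) then 1 else 0)
      + ennreal (exponential_density 1 (fst x)) * indicator {0..t} (snd x))"
  define R :: "real \<Rightarrow> ennreal" where "R = (\<lambda>r. ennreal (Gmax lam RD) * indicator {0..RD} r)"
  have [measurable]: "F \<in> borel_measurable borel" "H \<in> borel_measurable L2" "R \<in> borel_measurable borel"
    unfolding F_def H_def R_def by measurable
  have "emeasure (joint_law lam RD) S = (\<integral>\<^sup>+z. fJ lam RD z * indicator S z \<partial>L4)"
    unfolding S_def by (rule em_J[OF S1_meas])
  also have "\<dots> \<le> (\<integral>\<^sup>+z. F (fst z) * H (fst (snd z), fst (snd (snd z))) * R (snd (snd (snd z))) \<partial>L4)"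
  proof (rule nn_integral_mono)
    fix z :: r4
    obtain a b c r where z: "z = (a, b, c, r)" by (cases z) auto
    show "fJ lam RD z * indicator S z \<le> F (fst z) * H (fst (snd z), fst (snd (snd z))) * R (snd (snd (snd z)))"
    proof (cases "z \<in> S \<and> 0 \<le> a \<and> 0 \<le> b \<and> 0 \<le> c \<and> 0 \<le> r \<and> r \<le> RD")
      case False
      then have "fJ lam RD z * indicator S z = 0"
        using ed_neg[of a] ed_neg[of b] ed_neg[of c] nd_out[of r RD lam] by (auto simp: z)
      then show ?thesis by (metis zero_le)
    next
      case True
      define D where "D = 1 + d\<^sup>2"
      define q where "q = 1 + r\<^sup>2"
      define K where "K = 1 + RD\<^sup>2"
      have D0: "D > 0" and q1: "q \<ge> 1" and qK: "q \<le> K" unfolding D_def q_def K_def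
        using True by (auto intro: add_pos_nonneg power_mono)
      have h1: "a / D + eta * (c / D) * (b / q - e) < e" and h2: "b / q > e" and pos: "0 \<le> a" "0 \<le> b" "0 \<le> c" "0 \<le> r" "r \<le> RD"
        using True by (auto simp: z S_def D_def q_def)
      have bq: "b - q * e > 0" using h2 q1 by (simp add: field_simps)
      have nn: "0 \<le> eta * (c / D) * (b / q - e)" using pos l D0 h2 by simp
      have "a / D < e" using h1 nn by linarith
      then have aD: "a \<le> D * e" using D0 by (simp add: field_simps)
      have aD0: "a / D \<ge> 0" using pos D0 by simp
      have h3: "eta * (c / D) * (b / q - e) < e" using h1 aD0 by linarith
      have "eta * c * (b - q * e) = q * D * (eta * (c / D) * (b / q - e))"
        using D0 q1 by (simp add: field_simps)
      also have "\<dots> < q * D * e"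
        using h3 D0 q1 by (intro mult_strict_left_mono) auto
      also have "\<dots> \<le> K * D * e" using qK D0 l by (intro mult_right_mono) auto
      finally have k1: "eta * c * (b - q * e) < K * D * e" .
      have "eta * c * (b - s) \<le> eta * c * (b - q * e)"
        using qK l pos by (intro mult_left_mono) (auto simp: sdef K_def)
      also have "\<dots> < K * D * e" using k1 .
      finally have "eta * c * (b - s) < K * D * e" .
      then have cbs: "c * (b - s) < t" using l by (simp add: tdef K_def D_def field_simps)
      have Hge: "ennreal (exponential_density 1 b * exponential_density 1 c) \<le> H (b, c)"
      proof -
        consider "b \<le> s + t" | "s + t < b" "b \<le> s + 1" | "s + 1 < b" by linarith
        then show ?thesis
        proof cases
          case 1
          have "ennreal (exponential_density 1 b * exponential_density 1 c) \<le> ennreal (exponential_density 1 c)"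
            by (intro ennreal_leI) (auto intro: mult_left_le_one_le simp: ed_nonneg ed_le1)
          also have "\<dots> = indicator {0..s+t} b * ennreal (exponential_density 1 c)" using 1 pos by simp
          also have "\<dots> \<le> H (b, c)" unfolding H_def by (simp add: add.assoc add_increasing2)
          finally show ?thesis .
        next
          case 2
          have "c < t / (b - s)" using cbs 2 t0 by (simp add: field_simps)
          then have "ennreal (exponential_density 1 b * exponential_density 1 c) \<le> ennreal (if s+t \<le> b \<and> b \<le> s+1 \<and> 0 \<le> c \<and> c \<le> t / (b - s) then 1 else 0)"
            using 2 pos by (auto intro!: ennreal_leI mult_le_one simp: ed_nonneg ed_le1)
          also have "\<dots> \<le> H (b, c)" unfolding H_def by (simp add: add_increasing add_increasing2)
          finally show ?thesis .
        next
          case 3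
          have "c \<le> c * (b - s)" using 3 pos by (simp add: mult_le_cancel_left1)
          then have "c < t" using cbs by simp
          then have "ennreal (exponential_density 1 b * exponential_density 1 c) \<le> ennreal (exponential_density 1 b) * indicator {0..t} c"
          proof -
            have "exponential_density 1 b * exponential_density 1 c \<le> exponential_density 1 b"
              by (intro mult_right_le_one_le) (auto simp: ed_nonneg ed_le1)
            then have "ennreal (exponential_density 1 b * exponential_density 1 c) \<le> ennreal (exponential_density 1 b)"
              by (rule ennreal_leI)
            moreover have "ennreal (exponential_density 1 b) * indicator {0..t} c = ennreal (exponential_density 1 b)"
              using pos \<open>c < t\<close> by simp
            ultimately show ?thesis by simp
          qed
          also have "\<dots> \<le> H (b, c)" unfolding H_def by (simp add: add_increasing)
          finally show ?thesis .
        qed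
      qed
      have rhs: "F (fst z) * H (fst (snd z), fst (snd (snd z))) * R (snd (snd (snd z)))
          = H (b, c) * ennreal (Gmax lam RD)"
        using aD pos by (simp add: z F_def R_def D_def)
      have "fJ lam RD z * indicator S z = ennreal (exponential_density 1 a * exponential_density 1 b * exponential_density 1 c * nearest_density lam RD r)"
        using True by (simp add: z)
      also have "\<dots> \<le> ennreal (exponential_density 1 b * exponential_density 1 c * Gmax lam RD)"
        using l by (intro ennreal_leI) (auto intro!: mult_mono mult_left_le_one_le simp: ed_nonneg ed_le1 nd_le nd_nonneg mult_nonneg_nonneg)
      also have "\<dots> = ennreal (exponential_density 1 b * exponential_density 1 c) * ennreal (Gmax lam RD)"
        using Gmax_pos[OF l(1,2)] by (simp add: ennreal_mult ed_nonneg)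
      also have "\<dots> \<le> H (b, c) * ennreal (Gmax lam RD)" by (intro mult_right_mono Hge) simp
      finally show ?thesis unfolding rhs .
    qed
  qed
  also have "\<dots> = (\<integral>\<^sup>+a. F a \<partial>lborel) * (\<integral>\<^sup>+x. H x \<partial>L2) * (\<integral>\<^sup>+r. R r \<partial>lborel)"
    by (rule prod4) measurable
  also have "(\<integral>\<^sup>+a. F a \<partial>lborel) = ennreal ((1+d\<^sup>2)*e)"
    unfolding F_def using l by (intro int_Icc) (auto intro: add_nonneg_nonneg)
  also have "(\<integral>\<^sup>+x. H x \<partial>L2) = ennreal (s+t) + ennreal (- t * ln t) + ennreal t"
    unfolding H_def by (rule H_int[OF s0 t0 t1])
  also have "(\<integral>\<^sup>+r. R r \<partial>lborel) = ennreal (Gmax lam RD) * ennreal RD"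
    unfolding R_def using l by (simp add: nn_integral_cmult)
  finally show ?thesis unfolding S_def .
qed


lemma meas_le: "emeasure M A \<le> ennreal x \<Longrightarrow> 0 \<le> x \<Longrightarrow> measure M A \<le> x"
  unfolding measure_def using enn2real_mono[of "emeasure M A" "ennreal x"] by simp

lemma meas_ge: "ennreal y \<le> emeasure M A \<Longrightarrow> emeasure M A \<le> ennreal x \<Longrightarrow> 0 \<le> y \<Longrightarrow> y \<le> measure M A"
proof -
  assume a: "ennreal y \<le> emeasure M A" "emeasure M A \<le> ennreal x" "0 \<le> y"
  have "emeasure M A < \<top>" using le_less_trans[OF a(2) ennreal_less_top] .
  then show ?thesis unfolding measure_def using enn2real_mono[OF a(1)] a(3) by simp
qed

lemma P2_bounds:
  assumes l: "lam > 0" "RD > 0" "0 < eta" "eta \<le> 1"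
    and e: "e = eps_of Rt P" "e > 0" "e \<le> 1" and t1: "(1+RD\<^sup>2)*(1+d\<^sup>2)/eta * e \<le> 1"
  shows "exp (-1) * exp (-1) * Gmin lam RD * (RD/2) * e\<^sup>2 \<le> P2 lam RD d eta Rt P"
    and "P2 lam RD d eta Rt P \<le> e\<^sup>2 * ((1+d\<^sup>2) * Gmax lam RD * RD * (2*(1+RD\<^sup>2) + 2*((1+RD\<^sup>2)*(1+d\<^sup>2)/eta) - (1+RD\<^sup>2)*(1+d\<^sup>2)/eta * ln e))"
proof -
  define K where "K = 1 + RD\<^sup>2"
  define D where "D = 1 + d\<^sup>2"
  define c0 where "c0 = K * D / eta"
  define s where "s = K * e"
  define t where "t = c0 * e"
  have K1: "K \<ge> 1" and D1: "D \<ge> 1" unfolding K_def D_def by auto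
  have KD: "K * D \<ge> 1" using K1 D1 by (metis mult_mono' mult_1_left order_trans zero_le_one)
  have c01: "c0 \<ge> 1" unfolding c0_def using KD l by (simp add: le_divide_eq)
  have e0: "e > 0" by (rule e(2))
  have t0: "t > 0" unfolding t_def using c01 e0 by simp
  have s0: "s > 0" unfolding s_def using K1 e0 by simp
  have tt1: "t \<le> 1" using t1 by (simp add: t_def c0_def K_def D_def)
  have tdef': "t = (1+RD\<^sup>2)*(1+d\<^sup>2)*e/eta" by (simp add: t_def c0_def K_def D_def)
  have sdef': "s = (1+RD\<^sup>2)*e" by (simp add: s_def K_def)
  have Gm: "Gmax lam RD > 0" "Gmin lam RD > 0" using Gmax_pos Gmin_pos l by auto
  have lnt: "ln t \<le> 0" using t0 tt1 by simp
  have tl: "0 \<le> -t * ln t" using t0 lnt by (intro mult_nonpos_nonpos) auto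
  define U1 where "U1 = D*e*((s+t) + (-t*ln t) + t)*(Gmax lam RD*RD)"
  define U2 where "U2 = D*e*(K*e)*(Gmax lam RD*RD)"
  define L where "L = exp (-1) * e * (exp (-1) * e) * (Gmin lam RD * (RD/2))"
  have U1nn: "0 \<le> U1" proof -
    have "0 \<le> (s+t) + (-t*ln t) + t" using s0 t0 tl by linarith
    moreover have "0 \<le> D*e" "0 \<le> Gmax lam RD*RD" using D1 e0 Gm l by auto
    ultimately show ?thesis unfolding U1_def by simp
  qed
  have U2nn: "0 \<le> U2" unfolding U2_def using D1 K1 e0 Gm l by simp
  have Lnn: "0 \<le> L" unfolding L_def using e0 Gm l by simp
  let ?S1 = "{(a, b, c, r). a / (1 + d\<^sup>2) + eta * (c / (1 + d\<^sup>2)) * (b / (1 + r\<^sup>2) - e) < e \<and> b / (1 + r\<^sup>2) > e}"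
  let ?S2 = "{(a, b, c, r). a / (1 + d\<^sup>2) < e \<and> b / (1 + r\<^sup>2) < e}"
  have P2eq: "P2 lam RD d eta Rt P = measure (joint_law lam RD) ?S1 + measure (joint_law lam RD) ?S2"
    unfolding P2_def e(1) ..
  have "emeasure (joint_law lam RD) ?S1 \<le> ennreal (D*e) * (ennreal (s+t) + ennreal (- t * ln t) + ennreal t) * (ennreal (Gmax lam RD) * ennreal RD)"
    using upper_S1[OF l(1,2) e0 l(3,4) sdef' tdef' tt1] by (simp add: D_def)
  also have "\<dots> = ennreal U1" unfolding U1_def using D1 e0 s0 t0 tl Gm l
    by (simp add: ennreal_mult ennreal_plus[symmetric] del: ennreal_plus)
  finally have m1: "measure (joint_law lam RD) ?S1 \<le> U1" using U1nn by (rule meas_le)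
  have "emeasure (joint_law lam RD) ?S2 \<le> ennreal ((1+d\<^sup>2)*e) * ennreal ((1+RD\<^sup>2)*e) * (ennreal (Gmax lam RD) * ennreal RD)"
    by (rule upper_S2[OF l(1,2) e0])
  also have "\<dots> = ennreal U2" unfolding U2_def using D1 K1 e0 Gm l
    by (simp add: ennreal_mult D_def K_def)
  finally have m2u: "emeasure (joint_law lam RD) ?S2 \<le> ennreal U2" .
  have "ennreal L = ennreal (exp (-1) * e) * ennreal (exp (-1) * e) * (ennreal (Gmin lam RD) * ennreal (RD/2))"
  proof -
    have x1: "0 \<le> exp (-1) * e" and x2: "0 \<le> Gmin lam RD * (RD/2)" and x3: "0 \<le> exp (-1) * e * (exp (-1) * e)"
      and x4: "0 \<le> Gmin lam RD" and x5: "0 \<le> RD/2" using e0 Gm l by auto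
    show ?thesis unfolding L_def
      by (simp only: ennreal_mult[OF x3 x2] ennreal_mult[OF x1 x1] ennreal_mult[OF x4 x5])
  qed
  also have "\<dots> \<le> emeasure (joint_law lam RD) ?S2" by (rule lower_S2[OF l(1,2) e0 e(3)])
  finally have m2l: "L \<le> measure (joint_law lam RD) ?S2" using m2u Lnn by (rule meas_ge)
  have m2: "measure (joint_law lam RD) ?S2 \<le> U2" using m2u U2nn by (rule meas_le)
  have m1nn: "0 \<le> measure (joint_law lam RD) ?S1" by simp
  show "exp (-1) * exp (-1) * Gmin lam RD * (RD/2) * e\<^sup>2 \<le> P2 lam RD d eta Rt P"
  proof -
    have "L \<le> P2 lam RD d eta Rt P" using m2l m1nn P2eq by linarith
    moreover have "exp (-1) * exp (-1) * Gmin lam RD * (RD/2) * e\<^sup>2 = L"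
      unfolding L_def by (simp add: power2_eq_square mult_ac)
    ultimately show ?thesis by simp
  qed
  have "-t * ln t \<le> - c0 * e * ln e"
  proof -
    have "ln t = ln c0 + ln e" unfolding t_def using c01 e0 by (simp add: ln_mult)
    moreover have "ln c0 \<ge> 0" using c01 by simp
    moreover have "0 \<le> c0 * (e * ln c0)" using c01 e0 \<open>ln c0 \<ge> 0\<close> by simp
    ultimately show ?thesis using t0 unfolding t_def by (simp add: algebra_simps)
  qed
  then have "U1 \<le> D*e*((s+t) + (- c0 * e * ln e) + t)*(Gmax lam RD*RD)"
    unfolding U1_def using D1 e0 Gm l by (intro mult_right_mono mult_left_mono) auto
  then have "U1 + U2 \<le> e\<^sup>2 * (D * Gmax lam RD * RD * (2*K + 2*c0 - c0 * ln e))"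
    unfolding U2_def s_def t_def by (simp add: algebra_simps power2_eq_square)
  then show "P2 lam RD d eta Rt P \<le> e\<^sup>2 * ((1+d\<^sup>2) * Gmax lam RD * RD * (2*(1+RD\<^sup>2) + 2*((1+RD\<^sup>2)*(1+d\<^sup>2)/eta) - (1+RD\<^sup>2)*(1+d\<^sup>2)/eta * ln e))"
  proof -
    have "P2 lam RD d eta Rt P \<le> U1 + U2" using m1 m2 P2eq by linarith
    also note \<open>U1 + U2 \<le> _\<close>
    finally show ?thesis by (simp add: D_def K_def c0_def)
  qed
qed


theorem theorem2:
  fixes lam RD d eta Rt :: real
  assumes "lam > 0" and "RD > 0" and "d > 0" and "0 < eta" and "eta \<le> 1" and "Rt > 0"
  shows "((\<lambda>P. - (ln (P2 lam RD d eta Rt P) / ln P)) \<longlongrightarrow> 2) at_top"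
proof -
  note l = assms
  define tau where "tau = 2 powr (2 * Rt) - 1"
  have tau0: "tau > 0" unfolding tau_def using l by simp
  define K where "K = 1 + RD\<^sup>2"
  define D where "D = 1 + d\<^sup>2"
  define c0 where "c0 = K * D / eta"
  define M where "M = D * Gmax lam RD * RD"
  define A0 where "A0 = M * (2*K + 2*c0)"
  define B where "B = M * c0"
  define Lc where "Lc = exp (-1) * exp (-1) * Gmin lam RD * (RD/2)"
  have K1: "K \<ge> 1" and D1: "D \<ge> 1" unfolding K_def D_def by auto
  have c00: "c0 > 0" unfolding c0_def using K1 D1 l by simp
  have M0: "M > 0" unfolding M_def using D1 Gmax_pos[of lam RD] l by simp
  have B0: "B > 0" unfolding B_def using M0 c00 by simp
  have Lc0: "Lc > 0" unfolding Lc_def using Gmin_pos[of lam RD] l by simp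
  have ev: "eventually (\<lambda>P. max 2 (max tau (c0 * tau)) \<le> P) at_top" by (rule eventually_ge_at_top)
  have bounds: "eventually (\<lambda>P. (2*ln P - 2*ln tau - ln (A0 + B*ln P - B * ln tau))/ln P \<le> - (ln (P2 lam RD d eta Rt P) / ln P)
      \<and> - (ln (P2 lam RD d eta Rt P) / ln P) \<le> 2 - (ln Lc + 2*ln tau)/ln P) at_top"
    using ev
  proof (rule eventually_mono)
    fix P :: real assume P: "max 2 (max tau (c0 * tau)) \<le> P"
    define e where "e = eps_of Rt P"
    define p where "p = P2 lam RD d eta Rt P"
    have P1: "P > 1" using P by simp
    have e_eq: "e = tau / P" unfolding e_def eps_of_def tau_def ..
    have e0: "e > 0" using tau0 P1 e_eq by simp
    have e1: "e \<le> 1" using P P1 e_eq by (simp add: divide_le_eq)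
    have t1: "(1+RD\<^sup>2)*(1+d\<^sup>2)/eta * e \<le> 1"
    proof -
      have "c0 * e = c0 * tau / P" using e_eq by simp
      also have "\<dots> \<le> 1" using P P1 by (simp add: divide_le_eq)
      finally show ?thesis by (simp add: c0_def K_def D_def)
    qed
    have lo: "Lc * e\<^sup>2 \<le> p"
      using P2_bounds(1)[OF l(1,2,4,5) e_def e0 e1 t1] unfolding p_def Lc_def .
    have up0: "p \<le> e\<^sup>2 * ((1+d\<^sup>2) * Gmax lam RD * RD * (2*(1+RD\<^sup>2) + 2*((1+RD\<^sup>2)*(1+d\<^sup>2)/eta) - (1+RD\<^sup>2)*(1+d\<^sup>2)/eta * ln e))"
      using P2_bounds(2)[OF l(1,2,4,5) e_def e0 e1 t1] unfolding p_def .
    have lne: "ln e = ln tau - ln P" using e_eq tau0 P1 by (simp add: ln_div)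
    define X where "X = A0 + B*ln P - B * ln tau"
    have up: "p \<le> e\<^sup>2 * X"
    proof -
      have "(1+d\<^sup>2) * Gmax lam RD * RD * (2*(1+RD\<^sup>2) + 2*((1+RD\<^sup>2)*(1+d\<^sup>2)/eta) - (1+RD\<^sup>2)*(1+d\<^sup>2)/eta * ln e)
          = M * (2*K + 2*c0 - c0 * ln e)" by (simp add: M_def K_def D_def c0_def)
      also have "\<dots> = X" unfolding X_def A0_def B_def lne by (simp add: algebra_simps)
      finally show ?thesis using up0 by simp
    qed
    have pos: "0 < Lc * e\<^sup>2" using Lc0 e0 by simp
    have p0: "p > 0" using lo pos by linarith
    have "e\<^sup>2 * X > 0" using up p0 by linarith
    then have X0: "X > 0" using e0 by (simp add: zero_less_mult_iff)
    have lnP: "ln P > 0" using P1 by simp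
    have "ln (Lc * e\<^sup>2) \<le> ln p" using ln_le_cancel_iff[OF pos p0] lo by simp
    then have lo': "ln Lc + 2 * ln e \<le> ln p" using Lc0 e0 by (simp add: ln_mult ln_realpow)
    have pos2: "0 < e\<^sup>2 * X" using X0 e0 by simp
    have "ln p \<le> ln (e\<^sup>2 * X)" using ln_le_cancel_iff[OF p0 pos2] up by simp
    then have up': "ln p \<le> 2 * ln e + ln X" using X0 e0 by (simp add: ln_mult ln_realpow)
    have "2*ln P - 2*ln tau - ln X \<le> - ln p" using up' lne by linarith
    then have "(2*ln P - 2*ln tau - ln X)/ln P \<le> (- ln p) / ln P" using lnP by (rule divide_right_mono[OF _ less_imp_le])
    then have g1: "(2*ln P - 2*ln tau - ln X)/ln P \<le> - (ln p / ln P)" by simp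
    have "- ln p \<le> 2 * ln P - (ln Lc + 2*ln tau)" using lo' lne by linarith
    then have "(- ln p) / ln P \<le> (2 * ln P - (ln Lc + 2*ln tau)) / ln P" using lnP by (rule divide_right_mono[OF _ less_imp_le])
    also have "\<dots> = 2 - (ln Lc + 2*ln tau)/ln P" using lnP by (simp add: diff_divide_distrib)
    finally have g2: "- (ln p / ln P) \<le> 2 - (ln Lc + 2*ln tau)/ln P" by simp
    show "(2*ln P - 2*ln tau - ln (A0 + B*ln P - B * ln tau))/ln P \<le> - (ln (P2 lam RD d eta Rt P) / ln P)
      \<and> - (ln (P2 lam RD d eta Rt P) / ln P) \<le> 2 - (ln Lc + 2*ln tau)/ln P"
      using g1 g2 unfolding X_def p_def by simp
  qed
  have lim1: "((\<lambda>P. (2*ln P - 2*ln tau - ln (A0 + B*ln P - B * ln tau))/ln P) \<longlongrightarrow> 2) at_top"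
    using B0 by real_asymp
  have lim2: "((\<lambda>P. 2 - (ln Lc + 2*ln tau)/ln P) \<longlongrightarrow> 2) at_top"
    by real_asymp
  show ?thesis
    by (rule tendsto_sandwich[OF _ _ lim1 lim2]) (use bounds in \<open>auto elim: eventually_mono\<close>)
qed

end
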